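(* Let $N$ be a positive integer, and let $\bar{\mathcal A}\subset\mathbb C^N\setminus\{\mathbf 0\}$ and $\bar{\mathcal B}_1\subset\mathcal H_{++}^N$ be convex and closed. Let $(\mathbf a^\star,\mathbf R_1^\star)$ be an optimal solution of the convex problem $$\min_{\mathbf a\in\bar{\mathcal A},\ \mathbf R_1\in\bar{\mathcal B}_1}\ \mathbf a^H\mathbf R_1^{-1}\mathbf a,$$ and let $\mathbf w^\star=\mathbf R_1^{\star-1}\mathbf a^\star/\|\mathbf R_1^{\star-1/2}\mathbf a^\star\|$. Then $$\mathbf w^{\star H}\mathbf a^\star\mathbf a^{\star H}\mathbf w^\star=\max_{\mathbf w\ne\mathbf 0}\ \min_{\mathbf a\in\bar{\mathcal A},\ \mathbf R_1\in\bar{\mathcal B}_1}\frac{\mathbf w^H\mathbf a\mathbf a^H\mathbf w}{\mathbf w^H\mathbf R_1\mathbf w}=\min_{\mathbf a\in\bar{\mathcal A},\ \mathbf R_1\in\bar{\mathcal B}_1}\ \max_{\mathbf w\ne\mathbf 0}\frac{\mathbf w^H\mathbf a\mathbf a^H\mathbf w}{\mathbf w^H\mathbf R_1\mathbf w}.$$ Moreover, $(\mathbf w^\star,\mathbf a^\star,\mathbf R_1^\star)$ is an optimal solution of both the maximin and the minimax problems.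
   Context: $\mathcal H_{++}^N$ is the set of $N\times N$ Hermitian positive definite matrices; $\mathbf R^{-1/2}$ is the Hermitian positive definite inverse square root; $\|\cdot\|$ is the Euclidean norm. *)

theory Defs
  imports "HOL-Analysis.Analysis"
begin

text \<open>Complex N-vectors are \<open>complex ^ 'n\<close>, N x N complex matrices are \<open>complex ^ 'n ^ 'n\<close>,
  with N = CARD('n) arbitrary (positive).\<close>

definition hdot :: "complex ^ 'n \<Rightarrow> complex ^ 'n \<Rightarrow> complex" where
  "hdot w a = (\<Sum>i\<in>UNIV. cnj (w $ i) * a $ i)"

definition cadj :: "complex ^ 'n ^ 'n \<Rightarrow> complex ^ 'n ^ 'n" where
  "cadj R = (\<chi> i j. cnj (R $ j $ i))"

definition hermitian_mat :: "complex ^ 'n ^ 'n \<Rightarrow> bool" where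
  "hermitian_mat R \<longleftrightarrow> cadj R = R"

definition hpd_mat :: "complex ^ 'n ^ 'n \<Rightarrow> bool" where
  "hpd_mat R \<longleftrightarrow> hermitian_mat R \<and> (\<forall>x. x \<noteq> 0 \<longrightarrow> Re (hdot x (R *v x)) > 0)"

definition Hpp :: "(complex ^ 'n ^ 'n) set" where
  "Hpp = {R. hpd_mat R}"

definition inv_sqrt_mat :: "complex ^ 'n ^ 'n \<Rightarrow> complex ^ 'n ^ 'n" where
  "inv_sqrt_mat R = (THE S. hpd_mat S \<and> S ** S = matrix_inv R)"

definition obj :: "complex ^ 'n \<Rightarrow> complex ^ 'n ^ 'n \<Rightarrow> real" where
  "obj a R = Re (hdot a (matrix_inv R *v a))"

definition ratio :: "complex ^ 'n \<Rightarrow> complex ^ 'n \<Rightarrow> complex ^ 'n ^ 'n \<Rightarrow> real" where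
  "ratio w a R = Re (hdot w a * hdot a w) / Re (hdot w (R *v w))"

end

theory Submission
  imports Defs
begin

lemma quad_zero:
  fixes a c :: real
  assumes "a \<ge> 0" and "\<forall>e. 2*e*a + e^2*c \<le> 0"
  shows "a = 0"
proof (rule ccontr)
  assume "a \<noteq> 0" hence ap: "a > 0" using assms(1) by simp
  define e where "e = a / (\<bar>c\<bar> + 1)"
  have ep: "e > 0" using ap by (simp add: e_def)
  have q1: "\<bar>c\<bar> / (\<bar>c\<bar> + 1) \<le> 1" by simp
  have "e * \<bar>c\<bar> = a * (\<bar>c\<bar> / (\<bar>c\<bar> + 1))" by (simp add: e_def)
  also have "\<dots> \<le> a * 1" using q1 ap by (intro mult_left_mono) auto
  finally have q2: "e * \<bar>c\<bar> \<le> a" by simp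
  have "e * (- \<bar>c\<bar>) \<le> e * c" using ep by (intro mult_left_mono) auto
  hence "2*a + e*c > 0" using ap q2 by linarith
  hence "e * (2*a + e*c) > 0" using ep by simp
  moreover have "e * (2*a + e*c) = 2*e*a + e^2*c" by (simp add: algebra_simps power2_eq_square)
  ultimately show False using assms(2) by (metis not_less)
qed

lemma aux1:
  fixes l e Z W F :: real
  assumes "l + 2*e*(Z + l*W) + e^2*F \<le> l*(1 + 2*e*W + e^2*Z)"
  shows "2*e*Z + e^2*(F - l*Z) \<le> 0"
  using assms by (simp add: algebra_simps power2_eq_square)

lemma eig_exists:
  fixes f :: "'a::euclidean_space \<Rightarrow> 'a"
  assumes lin: "linear f" and sa: "\<And>x y. f x \<bullet> y = x \<bullet> f y"
    and V: "subspace V" and inv: "f ` V \<subseteq> V" and ne: "V \<noteq> {0}"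
  shows "\<exists>v\<in>V. norm v = 1 \<and> f v = (v \<bullet> f v) *\<^sub>R v"
proof -
  let ?K = "V \<inter> sphere 0 1"
  have cK: "compact ?K"
    by (simp add: V closed_subspace closed_Int_compact)
  obtain x where x: "x \<in> V" "x \<noteq> 0" using ne V subspace_0 by blast
  have "(1 / norm x) *\<^sub>R x \<in> ?K" using x V by (simp add: subspace_scale)
  hence neK: "?K \<noteq> {}" by blast
  have cont: "continuous_on ?K (\<lambda>x. x \<bullet> f x)"
    using lin by (intro continuous_intros linear_continuous_on) (auto simp: linear_conv_bounded_linear)
  obtain v where v: "v \<in> ?K" and vmax: "\<And>y. y \<in> ?K \<Longrightarrow> y \<bullet> f y \<le> v \<bullet> f v"
    using continuous_attains_sup[OF cK neK cont] by blast
  define l where "l = v \<bullet> f v"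
  have vV: "v \<in> V" and nv: "norm v = 1" using v by auto
  have vv: "v \<bullet> v = 1" using nv by (simp add: dot_square_norm)
  have bound: "y \<bullet> f y \<le> l * (y \<bullet> y)" if yV: "y \<in> V" for y
  proof (cases "y = 0")
    case True thus ?thesis using lin by (simp add: linear_0)
  next
    case False
    let ?y = "(1 / norm y) *\<^sub>R y"
    have "?y \<in> ?K" using False yV V by (simp add: subspace_scale)
    hence "?y \<bullet> f ?y \<le> l" using vmax l_def by blast
    moreover have "?y \<bullet> f ?y = (y \<bullet> f y) / (norm y)^2"
      using lin by (simp add: linear_scale power2_eq_square)
    ultimately have "(y \<bullet> f y) / (norm y)^2 \<le> l" by simp
    hence "(y \<bullet> f y) \<le> l * (norm y)^2"
      using False by (simp add: pos_divide_le_eq)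
    thus ?thesis by (simp add: dot_square_norm)
  qed
  define z where "z = f v - l *\<^sub>R v"
  have zV: "z \<in> V" unfolding z_def using inv vV V
    by (meson image_subset_iff subspace_diff subspace_scale)
  have "2*e*(z \<bullet> z) + e^2*(z \<bullet> f z - l * (z \<bullet> z)) \<le> 0" for e
  proof -
    have "v + e *\<^sub>R z \<in> V" using vV zV V by (simp add: subspace_add subspace_scale)
    note b = bound[OF this]
    have fz: "f (v + e *\<^sub>R z) = f v + e *\<^sub>R f z" using lin by (simp add: linear_add linear_scale)
    have vfz: "v \<bullet> f z = z \<bullet> f v" using sa[of v z] by (simp add: inner_commute)
    have h2: "(v + e *\<^sub>R z) \<bullet> f (v + e *\<^sub>R z) = l + 2*e*(z \<bullet> f v) + e^2 * (z \<bullet> f z)"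
      unfolding fz using vfz l_def
      by (simp add: inner_add_left inner_add_right power2_eq_square algebra_simps)
    have h3: "(v + e *\<^sub>R z) \<bullet> (v + e *\<^sub>R z) = 1 + 2*e*(v \<bullet> z) + e^2*(z \<bullet> z)"
      using vv by (simp add: inner_add_left inner_add_right inner_commute[of z v] power2_eq_square algebra_simps)
    have h4: "z \<bullet> f v = z \<bullet> z + l * (v \<bullet> z)"
      unfolding z_def by (simp add: inner_diff_left inner_diff_right inner_commute algebra_simps)
    have H: "l + 2*e*(z \<bullet> z + l * (v \<bullet> z)) + e^2 * (z \<bullet> f z) \<le> l * (1 + 2*e*(v \<bullet> z) + e^2*(z \<bullet> z))"
      using b h2 h3 h4 by simp
    show ?thesis using aux1[OF H] .
  qed
  hence "z \<bullet> z = 0" using quad_zero[of "z \<bullet> z"] by auto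
  hence "z = 0" by simp
  thus ?thesis using vV nv l_def z_def by auto
qed


lemma spectral_basis:
  fixes f :: "'a::euclidean_space \<Rightarrow> 'a"
  assumes lin: "linear f" and sa: "\<And>x y. f x \<bullet> y = x \<bullet> f y"
  shows "subspace V \<Longrightarrow> f ` V \<subseteq> V \<Longrightarrow> \<exists>B. finite B \<and> B \<subseteq> V \<and> pairwise orthogonal B
           \<and> (\<forall>b\<in>B. norm b = 1 \<and> f b = (b \<bullet> f b) *\<^sub>R b) \<and> V \<subseteq> span B"
proof (induction "dim V" arbitrary: V rule: less_induct)
  case less
  show ?case
  proof (cases "V = {0}")
    case True thus ?thesis by (rule_tac x="{}" in exI) auto
  next
    case False
    obtain v where vV: "v \<in> V" and nv: "norm v = 1" and ev: "f v = (v \<bullet> f v) *\<^sub>R v"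
      using eig_exists[OF lin sa less.prems False] by blast
    have vv: "v \<bullet> v = 1" using nv by (simp add: dot_square_norm)
    define V' where "V' = {x\<in>V. v \<bullet> x = 0}"
    have sV': "subspace V'" using less.prems(1)
      unfolding V'_def subspace_def by (auto simp: inner_add_right)
    have iV': "f ` V' \<subseteq> V'"
    proof
      fix y assume "y \<in> f ` V'"
      then obtain x where x: "x \<in> V'" "y = f x" by blast
      have "f x \<in> V" using x less.prems(2) V'_def by auto
      moreover have "v \<bullet> f x = 0"
      proof -
        have "v \<bullet> f x = f v \<bullet> x" using sa[of v x] by simp
        also have "\<dots> = (v \<bullet> f v) * (v \<bullet> x)" by (subst ev) simp
        also have "\<dots> = 0" using x V'_def by simp
        finally show ?thesis .
      qed
      ultimately show "y \<in> V'" using x V'_def by simp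
    qed
    have sub: "V' \<subseteq> V" by (auto simp: V'_def)
    have vnot: "v \<notin> V'" using vv V'_def by auto
    have e1: "span V' = V'" using sV' by (simp add: span_eq_iff)
    have e2: "span V = V" using less.prems(1) by (simp add: span_eq_iff)
    have "V' \<subset> V" using sub vnot vV by blast
    hence "span V' \<subset> span V" by (simp add: e1 e2)
    hence "dim V' < dim V" by (rule dim_psubset)
    from less.hyps[OF this sV' iV'] obtain B' where
      B': "finite B'" "B' \<subseteq> V'" "pairwise orthogonal B'"
          "\<forall>b\<in>B'. norm b = 1 \<and> f b = (b \<bullet> f b) *\<^sub>R b" "V' \<subseteq> span B'" by blast
    show ?thesis
    proof (rule exI[of _ "insert v B'"], intro conjI)
      show "finite (insert v B')" using B' by simp
      show "insert v B' \<subseteq> V" using B' sub vV by auto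
      show "pairwise orthogonal (insert v B')"
      proof -
        have "\<forall>y\<in>B'. v \<bullet> y = 0" using B'(2) V'_def by auto
        hence "\<forall>y\<in>B'. orthogonal v y \<and> orthogonal y v"
          by (simp add: orthogonal_def inner_commute)
        thus ?thesis using B'(3) by (simp add: pairwise_insert)
      qed
      show "\<forall>b\<in>insert v B'. norm b = 1 \<and> f b = (b \<bullet> f b) *\<^sub>R b" using B' nv ev by auto
      show "V \<subseteq> span (insert v B')"
      proof
        fix x assume xV: "x \<in> V"
        define y where "y = x - (v \<bullet> x) *\<^sub>R v"
        have "y \<in> V" unfolding y_def using xV vV less.prems(1)
          by (simp add: subspace_diff subspace_scale)
        moreover have "v \<bullet> y = 0" unfolding y_def using vv by (simp add: inner_diff_right)
        ultimately have "y \<in> V'" by (simp add: V'_def)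
        hence "y \<in> span (insert v B')" using B'(5) span_mono[of B' "insert v B'"] by auto
        moreover have "v \<in> span (insert v B')" by (simp add: span_base)
        ultimately have "y + (v \<bullet> x) *\<^sub>R v \<in> span (insert v B')"
          by (simp add: span_add span_scale)
        thus "x \<in> span (insert v B')" by (simp add: y_def)
      qed
    qed
  qed
qed


lemma onb_inner:
  assumes "pairwise orthogonal B" "\<forall>b\<in>B. norm b = 1" "b \<in> B" "c \<in> B"
  shows "b \<bullet> c = (if b = c then 1 else 0)"
  using assms by (auto simp: pairwise_def orthogonal_def dot_square_norm)

lemma spectral_UNIV:
  fixes f :: "'a::euclidean_space \<Rightarrow> 'a"
  assumes lin: "linear f" and sa: "\<And>x y. f x \<bullet> y = x \<bullet> f y"
  obtains B where "finite B" "pairwise orthogonal B" "\<forall>b\<in>B. norm b = 1"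
    "\<forall>b\<in>B. f b = (b \<bullet> f b) *\<^sub>R b" "\<And>x. (\<Sum>b\<in>B. (x \<bullet> b) *\<^sub>R b) = x"
proof -
  obtain B where B: "finite B" "pairwise orthogonal B"
     "\<forall>b\<in>B. norm b = 1 \<and> f b = (b \<bullet> f b) *\<^sub>R b" "UNIV \<subseteq> span B"
    using spectral_basis[OF lin sa, of UNIV] by auto
  have "(\<Sum>b\<in>B. (x \<bullet> b) *\<^sub>R b) = x" for x
    using orthonormal_basis_expand[of B x] B by auto
  thus ?thesis using that B by auto
qed

lemma sqrt_exists:
  fixes f :: "'a::euclidean_space \<Rightarrow> 'a"
  assumes lin: "linear f" and sa: "\<And>x y. f x \<bullet> y = x \<bullet> f y"
    and pos: "\<And>x. x \<noteq> 0 \<Longrightarrow> x \<bullet> f x > 0"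
  shows "\<exists>g. linear g \<and> (\<forall>x y. g x \<bullet> y = x \<bullet> g y) \<and> (\<forall>x. x \<noteq> 0 \<longrightarrow> x \<bullet> g x > 0)
            \<and> (\<forall>x. g (g x) = f x)"
proof -
  obtain B where fB: "finite B" and oB: "pairwise orthogonal B" and nB: "\<forall>b\<in>B. norm b = 1"
    and eB: "\<forall>b\<in>B. f b = (b \<bullet> f b) *\<^sub>R b" and exp: "\<And>x. (\<Sum>b\<in>B. (x \<bullet> b) *\<^sub>R b) = x"
    using spectral_UNIV[OF lin sa] by blast
  define lam where "lam b = b \<bullet> f b" for b
  have lp: "lam b > 0" if "b \<in> B" for b
  proof -
    have "b \<noteq> 0" using nB that by auto
    thus ?thesis using pos lam_def by simp
  qed
  have ip: "b \<bullet> c = (if b = c then 1 else 0)" if "b \<in> B" "c \<in> B" for b c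
    using onb_inner[OF oB nB that] .
  define g where "g x = (\<Sum>b\<in>B. (sqrt (lam b) * (x \<bullet> b)) *\<^sub>R b)" for x
  have gb: "g x \<bullet> c = sqrt (lam c) * (x \<bullet> c)" if c: "c \<in> B" for x c
  proof -
    have "g x \<bullet> c = (\<Sum>b\<in>B. sqrt (lam b) * (x \<bullet> b) * (b \<bullet> c))"
      by (simp add: g_def inner_sum_left)
    also have "\<dots> = (\<Sum>b\<in>B. if b = c then sqrt (lam c) * (x \<bullet> c) else 0)"
      by (rule sum.cong) (auto simp: ip c)
    also have "\<dots> = sqrt (lam c) * (x \<bullet> c)" using fB c by simp
    finally show ?thesis .
  qed
  have lin_g: "linear g"
  proof (rule linearI)
    fix x y show "g (x + y) = g x + g y"
      by (simp add: g_def inner_add_left distrib_left scaleR_add_left sum.distrib)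
  next
    fix r x show "g (r *\<^sub>R x) = r *\<^sub>R g x"
      by (simp add: g_def scaleR_sum_right algebra_simps)
  qed
  have sa_g: "g x \<bullet> y = x \<bullet> g y" for x y
  proof -
    have "g x \<bullet> y = (\<Sum>b\<in>B. sqrt (lam b) * (x \<bullet> b) * (b \<bullet> y))" by (simp add: g_def inner_sum_left)
    also have "\<dots> = (\<Sum>b\<in>B. sqrt (lam b) * (y \<bullet> b) * (x \<bullet> b))"
      by (rule sum.cong) (simp_all add: inner_commute[of b y for b] mult.commute mult.left_commute)
    also have "\<dots> = x \<bullet> g y" by (simp add: g_def inner_sum_right)
    finally show ?thesis .
  qed
  have gg: "g (g x) = f x" for x
  proof -
    have "g (g x) = (\<Sum>b\<in>B. (lam b * (x \<bullet> b)) *\<^sub>R b)"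
      unfolding g_def[of "g x"]
    proof (rule sum.cong)
      fix b assume b: "b \<in> B"
      have "sqrt (lam b) * sqrt (lam b) = lam b" using lp[OF b] by simp
      thus "(sqrt (lam b) * (g x \<bullet> b)) *\<^sub>R b = (lam b * (x \<bullet> b)) *\<^sub>R b"
        by (simp add: gb[OF b] mult.assoc[symmetric])
    qed simp
    also have "\<dots> = (\<Sum>b\<in>B. (x \<bullet> b) *\<^sub>R f b)"
    proof (rule sum.cong)
      fix b assume b: "b \<in> B"
      from eB b have "f b = (b \<bullet> f b) *\<^sub>R b" by blast
      hence "f b = lam b *\<^sub>R b" unfolding lam_def .
      thus "(lam b * (x \<bullet> b)) *\<^sub>R b = (x \<bullet> b) *\<^sub>R f b" by simp
    qed simp
    also have "\<dots> = f (\<Sum>b\<in>B. (x \<bullet> b) *\<^sub>R b)"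
      using lin by (simp add: linear_sum linear_scale)
    also have "\<dots> = f x" by (simp add: exp)
    finally show ?thesis .
  qed
  have pos_g: "x \<bullet> g x > 0" if x: "x \<noteq> 0" for x
  proof -
    have eq: "x \<bullet> g x = (\<Sum>b\<in>B. sqrt (lam b) * (x \<bullet> b)^2)"
      unfolding g_def inner_sum_right inner_scaleR_right
      by (rule sum.cong) (simp_all add: power2_eq_square mult.assoc inner_commute[of x b for b])
    have nn: "\<forall>b\<in>B. 0 \<le> sqrt (lam b) * (x \<bullet> b)^2" using lp by (simp add: less_imp_le)
    have "x \<bullet> g x \<noteq> 0"
    proof
      assume "x \<bullet> g x = 0"
      hence s0: "(\<Sum>b\<in>B. sqrt (lam b) * (x \<bullet> b)^2) = 0" using eq by simp
      have iff: "((\<Sum>b\<in>B. sqrt (lam b) * (x \<bullet> b)^2) = 0) \<longleftrightarrow> (\<forall>b\<in>B. sqrt (lam b) * (x \<bullet> b)^2 = 0)"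
        by (rule sum_nonneg_eq_0_iff[OF fB]) (use nn in auto)
      have "\<forall>b\<in>B. sqrt (lam b) * (x \<bullet> b)^2 = 0" using iff s0 by blast
      hence z: "\<forall>b\<in>B. sqrt (lam b) * (x \<bullet> b)^2 = 0" .
      have "\<forall>b\<in>B. x \<bullet> b = 0"
      proof
        fix b assume b: "b \<in> B"
        have "sqrt (lam b) \<noteq> 0" using lp[OF b] by simp
        moreover have "sqrt (lam b) * (x \<bullet> b)^2 = 0" using z b by blast
        ultimately have "(x \<bullet> b)^2 = 0" by simp
        thus "x \<bullet> b = 0" by simp
      qed
      hence "(\<Sum>b\<in>B. (x \<bullet> b) *\<^sub>R b) = 0" by simp
      thus False using exp[of x] x by simp
    qed
    moreover have "x \<bullet> g x \<ge> 0" using eq nn by (simp add: sum_nonneg)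
    ultimately show ?thesis by simp
  qed
  show ?thesis using lin_g sa_g pos_g gg by blast
qed

lemma sqrt_unique:
  fixes g h :: "'a::euclidean_space \<Rightarrow> 'a"
  assumes lg: "linear g" and sg: "\<And>x y. g x \<bullet> y = x \<bullet> g y" and pg: "\<And>x. x \<noteq> 0 \<Longrightarrow> x \<bullet> g x > 0"
    and lh: "linear h" and sh: "\<And>x y. h x \<bullet> y = x \<bullet> h y" and ph: "\<And>x. x \<noteq> 0 \<Longrightarrow> x \<bullet> h x > 0"
    and gh: "\<And>x. g (g x) = h (h x)"
  shows "g = h"
proof -
  define D where "D x = g x - h x" for x
  have lD: "linear D" unfolding D_def using lg lh by (rule linear_compose_sub)
  have sD: "D x \<bullet> y = x \<bullet> D y" for x y
  proof -
    have "D x \<bullet> y = g x \<bullet> y - h x \<bullet> y" by (simp add: D_def inner_diff_left)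
    also have "\<dots> = x \<bullet> g y - x \<bullet> h y" by (simp only: sg sh)
    also have "\<dots> = x \<bullet> D y" by (simp add: D_def inner_diff_right)
    finally show ?thesis .
  qed
  obtain B where fB: "finite B" and oB: "pairwise orthogonal B" and nB: "\<forall>b\<in>B. norm b = 1"
    and eB: "\<forall>b\<in>B. D b = (b \<bullet> D b) *\<^sub>R b" and exp: "\<And>x. (\<Sum>b\<in>B. (x \<bullet> b) *\<^sub>R b) = x"
    using spectral_UNIV[OF lD sD] by blast
  have D0: "D b = 0" if b: "b \<in> B" for b
  proof -
    define mu where "mu = b \<bullet> D b"
    from eB b have "D b = (b \<bullet> D b) *\<^sub>R b" by blast
    hence Db: "D b = mu *\<^sub>R b" unfolding mu_def .
    have b0: "b \<noteq> 0" using nB b by auto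
    have e1: "g (D b) = g (g b) - g (h b)" unfolding D_def by (rule linear_diff[OF lg])
    have e2: "D (h b) = g (h b) - h (h b)" unfolding D_def ..
    have s0: "b \<bullet> g (D b) + b \<bullet> D (h b) = 0"
      unfolding e1 e2 inner_diff_right gh by simp
    have t1: "b \<bullet> g (D b) = mu * (b \<bullet> g b)" unfolding Db linear_scale[OF lg] by simp
    have t2: "b \<bullet> D (h b) = mu * (b \<bullet> h b)"
      unfolding sD[of b "h b", symmetric] Db by simp
    have "mu * (b \<bullet> g b + b \<bullet> h b) = 0" using s0 unfolding t1 t2 by (simp add: distrib_left)
    moreover have "b \<bullet> g b + b \<bullet> h b > 0" using pg[OF b0] ph[OF b0] by simp
    ultimately have "mu = 0" by simp
    thus ?thesis using Db by simp
  qed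
  have "D x = 0" for x
  proof -
    have "D x = D (\<Sum>b\<in>B. (x \<bullet> b) *\<^sub>R b)" by (simp add: exp)
    also have "\<dots> = (\<Sum>b\<in>B. (x \<bullet> b) *\<^sub>R D b)" using lD by (simp add: linear_sum linear_scale)
    also have "\<dots> = 0" using D0 by simp
    finally show ?thesis .
  qed
  thus ?thesis by (auto simp: D_def fun_eq_iff)
qed

lemma hdot_conj: "hdot x y = cnj (hdot y x)"
  by (simp add: hdot_def mult.commute)

lemma inner_hdot: "x \<bullet> y = Re (hdot x y)" for x y :: "complex ^ 'n"
  by (simp add: inner_vec_def hdot_def inner_complex_def Re_sum)

lemma hdot_add_right: "hdot x (y + z) = hdot x y + hdot x z"
  by (simp add: hdot_def distrib_left sum.distrib)
lemma hdot_add_left: "hdot (x + y) z = hdot x z + hdot y z"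
  by (simp add: hdot_def distrib_right sum.distrib)
lemma hdot_diff_right: "hdot x (y - z) = hdot x y - hdot x z"
  by (simp add: hdot_def right_diff_distrib sum_subtractf)
lemma hdot_diff_left: "hdot (x - y) z = hdot x z - hdot y z"
  by (simp add: hdot_def left_diff_distrib sum_subtractf)
lemma hdot_smult_right: "hdot x (c *s y) = c * hdot x y"
  by (simp add: hdot_def sum_distrib_left mult_ac)
lemma hdot_smult_left: "hdot (c *s x) y = cnj c * hdot x y"
  by (simp add: hdot_def sum_distrib_left mult_ac)
lemma scaleR_smult: "r *\<^sub>R x = of_real r *s (x :: complex ^ 'n)"
  by (simp add: vec_eq_iff) (simp add: scaleR_conv_of_real)
lemma hdot_scaleR_right: "hdot x (r *\<^sub>R y) = of_real r * hdot x y"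
  by (simp only: scaleR_smult hdot_smult_right)
lemma hdot_scaleR_left: "hdot (r *\<^sub>R x) y = of_real r * hdot x y"
  by (simp only: scaleR_smult hdot_smult_left complex_cnj_complex_of_real)
lemma hdot_neg_left: "hdot (- x) y = - hdot x y"
  by (simp add: hdot_def sum_negf)
lemma hdot_neg_right: "hdot x (- y) = - hdot x y"
  by (simp add: hdot_def sum_negf)
lemma hdot_zero_left[simp]: "hdot 0 y = 0" by (simp add: hdot_def)
lemma hdot_zero_right[simp]: "hdot x 0 = 0" by (simp add: hdot_def)

lemma hdot_self_eq0: "hdot z z = 0 \<Longrightarrow> z = 0" for z :: "complex ^ 'n"
proof -
  assume "hdot z z = 0"
  hence "z \<bullet> z = 0" by (simp add: inner_hdot)
  thus "z = 0" by simp
qed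

lemma Re_hdot_self_nonneg: "Re (hdot z z) \<ge> 0" for z :: "complex ^ 'n"
  by (metis inner_hdot inner_ge_zero)

lemma hdot_cadj: "hdot x (A *v y) = hdot (cadj A *v x) y"
proof -
  have "hdot x (A *v y) = (\<Sum>i\<in>UNIV. \<Sum>j\<in>UNIV. cnj (x $ i) * (A $ i $ j * y $ j))"
    by (simp add: hdot_def matrix_vector_mult_def sum_distrib_left)
  also have "\<dots> = (\<Sum>j\<in>UNIV. \<Sum>i\<in>UNIV. cnj (x $ i) * (A $ i $ j * y $ j))"
    by (rule sum.swap)
  also have "\<dots> = hdot (cadj A *v x) y"
    by (simp add: hdot_def matrix_vector_mult_def cadj_def sum_distrib_right sum_distrib_left mult_ac)
  finally show ?thesis .
qed

lemma herm_sym: "hermitian_mat A \<Longrightarrow> hdot (A *v x) y = hdot x (A *v y)"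
  by (simp add: hermitian_mat_def hdot_cadj)

lemma cadj_cadj[simp]: "cadj (cadj A) = A"
  by (simp add: cadj_def vec_eq_iff)

lemma sym_herm:
  fixes A :: "complex ^ 'n ^ 'n"
  assumes sy: "\<And>x y. hdot (A *v x) y = hdot x (A *v y)"
  shows "hermitian_mat A"
proof -
  have "cadj A *v x = A *v x" for x
  proof -
    have "hdot (cadj A *v x - A *v x) y = 0" for y
    proof -
      have "hdot y (cadj A *v x) = hdot (A *v y) x"
        using hdot_cadj[of y "cadj A" x] by simp
      also have "\<dots> = hdot y (A *v x)" by (rule sy)
      finally have "hdot (cadj A *v x) y = hdot (A *v x) y"
        by (metis hdot_conj)
      thus ?thesis by (simp add: hdot_diff_left)
    qed
    hence "hdot (cadj A *v x - A *v x) (cadj A *v x - A *v x) = 0" by blast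
    thus ?thesis using hdot_self_eq0 by fastforce
  qed
  hence "cadj A = A" by (simp add: matrix_eq)
  thus ?thesis by (simp add: hermitian_mat_def)
qed

lemma mv_smult: "A *v (c *s x) = c *s (A *v x)" for A :: "complex ^ 'n ^ 'm"
  by (simp add: vec_eq_iff matrix_vector_mult_def sum_distrib_left mult_ac)

lemma smult_scaleR: "c *s (r *\<^sub>R x) = r *\<^sub>R (c *s x)" for x :: "complex ^ 'n"
  by (simp add: scaleR_smult vector_smult_assoc mult.commute)

lemma smult_decomp: "c *s x = Re c *\<^sub>R x + Im c *\<^sub>R (\<i> *s x)" for x :: "complex ^ 'n"
proof -
  have "c = complex_of_real (Re c) + \<i> * complex_of_real (Im c)" by (rule complex_eq)
  hence "c * z = Re c *\<^sub>R z + Im c *\<^sub>R (\<i> * z)" for z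
    by (metis (no_types, lifting) distrib_right mult.commute mult.left_commute scaleR_conv_of_real)
  thus ?thesis by (simp add: vec_eq_iff)
qed

lemma lin_mv: "linear (\<lambda>x. (A :: complex ^ 'n ^ 'n) *v x)"
  using matrix_vector_mul_bounded_linear[of A] bounded_linear.linear by blast

lemma hpd_real:
  fixes M :: "complex ^ 'n ^ 'n"
  assumes "hpd_mat M"
  shows "linear ((*v) M)" "\<And>x y. (M *v x) \<bullet> y = x \<bullet> (M *v y)" "\<And>x. x \<noteq> 0 \<Longrightarrow> x \<bullet> (M *v x) > 0"
proof -
  show "linear ((*v) M)" using lin_mv[of M] by simp
  show "(M *v x) \<bullet> y = x \<bullet> (M *v y)" for x y
  proof -
    have hM: "hermitian_mat M" using assms hpd_mat_def by blast
    show ?thesis by (simp add: inner_hdot herm_sym[OF hM])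
  qed
  show "x \<noteq> 0 \<Longrightarrow> x \<bullet> (M *v x) > 0" for x
    using assms by (simp add: inner_hdot hpd_mat_def)
qed

lemma hpd_sqrt_exists:
  fixes M :: "complex ^ 'n ^ 'n"
  assumes hM: "hpd_mat M"
  shows "\<exists>S. hpd_mat S \<and> S ** S = M"
proof -
  note r = hpd_real[OF hM]
  obtain g where lg: "linear g" and sg: "\<forall>x y. g x \<bullet> y = x \<bullet> g y"
    and pg: "\<forall>x. x \<noteq> 0 \<longrightarrow> x \<bullet> g x > 0" and gg: "\<forall>x. g (g x) = M *v x"
    using sqrt_exists[OF r] by blast
  define g' where "g' x = (- \<i>) *s g (\<i> *s x)" for x
  have lg': "linear g'"
  proof (rule linearI)
    fix x y show "g' (x + y) = g' x + g' y"
      by (simp add: g'_def vector_add_ldistrib linear_add[OF lg])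
  next
    fix r x show "g' (r *\<^sub>R x) = r *\<^sub>R g' x"
      by (simp add: g'_def smult_scaleR linear_scale[OF lg])
  qed
  have key1: "g' x \<bullet> y = g (\<i> *s x) \<bullet> (\<i> *s y)" for x y
    by (simp add: g'_def inner_hdot hdot_smult_left hdot_smult_right hdot_neg_left hdot_neg_right)
  have key2: "(\<i> *s x) \<bullet> g (\<i> *s y) = x \<bullet> g' y" for x y
    by (simp add: g'_def inner_hdot hdot_smult_left hdot_smult_right hdot_neg_left hdot_neg_right)
  have sg': "g' x \<bullet> y = x \<bullet> g' y" for x y
    using key1 key2 sg by metis
  have pg': "x \<bullet> g' x > 0" if "x \<noteq> 0" for x
  proof -
    have "\<i> *s x \<noteq> 0" using that by (simp add: vec_eq_iff)
    hence "(\<i> *s x) \<bullet> g (\<i> *s x) > 0" using pg by blast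
    thus ?thesis using key2 by metis
  qed
  have g'g': "g' (g' x) = g (g x)" for x
  proof -
    have "g' (g' x) = (- \<i>) *s g (g (\<i> *s x))"
      by (simp add: g'_def vector_smult_assoc)
    also have "\<dots> = M *v x" using gg by (simp add: mv_smult vector_smult_assoc)
    finally show ?thesis using gg by simp
  qed
  have gpos: "\<And>x. x \<noteq> 0 \<Longrightarrow> x \<bullet> g x > 0" using pg by blast
  have gsa: "\<And>x y. g x \<bullet> y = x \<bullet> g y" using sg by blast
  have "g' = g"
    by (rule sqrt_unique[OF lg' sg' pg' lg gsa gpos g'g'])
  have gi: "g (\<i> *s x) = \<i> *s g x" for x
  proof -
    have e: "(- \<i>) *s g (\<i> *s x) = g x" using fun_cong[OF \<open>g' = g\<close>, of x] unfolding g'_def .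
    have "g (\<i> *s x) = \<i> *s ((- \<i>) *s g (\<i> *s x))" by (simp add: vector_smult_assoc)
    also have "\<dots> = \<i> *s g x" by (simp only: e)
    finally show ?thesis .
  qed
  have gc: "g (c *s x) = c *s g x" for c x
  proof -
    have "g (c *s x) = Re c *\<^sub>R g x + Im c *\<^sub>R g (\<i> *s x)"
      by (simp only: smult_decomp[of c x] linear_add[OF lg] linear_scale[OF lg])
    also have "\<dots> = c *s g x" by (simp only: gi smult_decomp[of c "g x"])
    finally show ?thesis .
  qed
  have vs: "vector_space ((*s) :: complex \<Rightarrow> complex ^ 'n \<Rightarrow> complex ^ 'n)"
    using matrix_vector_mul_linear_gen[of M] by (simp add: Vector_Spaces.linear_iff)
  have vl: "Vector_Spaces.linear (*s) (*s) g"
    unfolding Vector_Spaces.linear_iff using vs linear_add[OF lg] gc by blast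
  define S where "S = matrix g"
  have Sv: "S *v x = g x" for x unfolding S_def by (rule matrix_works[OF vl])
  have symS: "hdot (S *v x) y = hdot x (S *v y)" for x y
  proof -
    have re: "Re (hdot (g x) y) = Re (hdot x (g y))" for x y
      using gsa[of x y] by (simp add: inner_hdot)
    have "Re (hdot (g (\<i> *s x)) y) = Re (hdot (\<i> *s x) (g y))" by (rule re)
    hence im: "Im (hdot (g x) y) = Im (hdot x (g y))"
      by (simp add: gi hdot_smult_left)
    show ?thesis unfolding Sv using re[of x y] im by (simp add: complex_eq_iff)
  qed
  have hS: "hpd_mat S"
    unfolding hpd_mat_def using sym_herm[OF symS] gpos by (simp add: Sv inner_hdot)
  have "S ** S = M"
    by (simp add: matrix_eq matrix_vector_mul_assoc[symmetric] Sv gg)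
  thus ?thesis using hS by blast
qed

lemma hpd_sqrt_unique:
  fixes S T :: "complex ^ 'n ^ 'n"
  assumes hS: "hpd_mat S" and hT: "hpd_mat T" and e: "S ** S = T ** T"
  shows "S = T"
proof -
  note rS = hpd_real[OF hS] and rT = hpd_real[OF hT]
  have "S *v (S *v x) = T *v (T *v x)" for x
    by (metis e matrix_vector_mul_assoc)
  hence "(*v) S = (*v) T"
    using sqrt_unique[OF rS rT] by blast
  thus ?thesis by (simp add: matrix_eq)
qed

lemma scaleR_mv: "(r *\<^sub>R A) *v x = r *\<^sub>R (A *v x)" for A :: "complex ^ 'n ^ 'm"
  by (simp add: vec_eq_iff matrix_vector_mult_def scaleR_sum_right)

lemma hpd_herm: "R \<in> Hpp \<Longrightarrow> hdot (R *v x) y = hdot x (R *v y)"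
  by (simp add: Hpp_def hpd_mat_def herm_sym)

lemma hpd_pos: "R \<in> Hpp \<Longrightarrow> x \<noteq> 0 \<Longrightarrow> Re (hdot x (R *v x)) > 0"
  by (simp add: Hpp_def hpd_mat_def)

lemma hpd_nonneg: "R \<in> Hpp \<Longrightarrow> Re (hdot x (R *v x)) \<ge> 0"
  by (cases "x = 0") (auto dest: hpd_pos[of R x])

lemma hpd_inv:
  fixes R :: "complex ^ 'n ^ 'n"
  assumes "R \<in> Hpp"
  shows "R ** matrix_inv R = mat 1" "matrix_inv R ** R = mat 1"
proof -
  have "\<forall>x. R *v x = 0 \<longrightarrow> x = 0"
  proof (intro allI impI)
    fix x assume "R *v x = 0"
    thus "x = 0" using hpd_pos[OF assms, of x] by (cases "x = 0") auto
  qed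
  hence "\<exists>B. B ** R = mat 1" using matrix_left_invertible_ker(1) by blast
  hence "invertible R" using invertible_left_inverse by blast
  hence ex: "\<exists>A'. R ** A' = mat 1 \<and> A' ** R = mat 1" by (simp add: invertible_def)
  have "R ** matrix_inv R = mat 1 \<and> matrix_inv R ** R = mat 1"
    unfolding matrix_inv_def by (rule someI_ex[OF ex])
  thus "R ** matrix_inv R = mat 1" "matrix_inv R ** R = mat 1" by auto
qed

lemma Rinv_v:
  assumes "R \<in> Hpp"
  shows "R *v (matrix_inv R *v y) = y" "matrix_inv R *v (R *v y) = y"
  using hpd_inv[OF assms] by (simp_all add: matrix_vector_mul_assoc)

lemma inv_hpd:
  fixes R :: "complex ^ 'n ^ 'n"
  assumes hR: "R \<in> Hpp"
  shows "hpd_mat (matrix_inv R)"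
proof -
  let ?M = "matrix_inv R"
  have sy: "hdot (?M *v x) y = hdot x (?M *v y)" for x y
  proof -
    have "hdot (?M *v x) y = hdot (?M *v x) (R *v (?M *v y))" by (simp add: Rinv_v[OF hR])
    also have "\<dots> = hdot (R *v (?M *v x)) (?M *v y)" by (simp add: hpd_herm[OF hR])
    also have "\<dots> = hdot x (?M *v y)" by (simp add: Rinv_v[OF hR])
    finally show ?thesis .
  qed
  have pos: "Re (hdot x (?M *v x)) > 0" if "x \<noteq> 0" for x
  proof -
    define y where "y = ?M *v x"
    have Ry: "R *v y = x" by (simp add: y_def Rinv_v[OF hR])
    have "y \<noteq> 0" using Ry that by auto
    hence "Re (hdot y (R *v y)) > 0" by (rule hpd_pos[OF hR])
    moreover have "hdot x (?M *v x) = hdot (R *v y) y" using Ry y_def by simp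
    ultimately show ?thesis by (simp add: hpd_herm[OF hR])
  qed
  show ?thesis using sym_herm[OF sy] pos by (simp add: hpd_mat_def)
qed

lemma Re_hdot_sym: "Re (hdot x y) = Re (hdot y x)"
  by (subst hdot_conj) simp

lemma obj_var:
  assumes hR: "R \<in> Hpp"
  shows "obj a R \<ge> 2 * Re (hdot v a) - Re (hdot v (R *v v))"
proof -
  define vs where "vs = matrix_inv R *v a"
  have Rvs: "R *v vs = a" by (simp add: vs_def Rinv_v[OF hR])
  have ob: "obj a R = Re (hdot vs a)" by (simp add: obj_def vs_def Re_hdot_sym)
  have h0: "0 \<le> Re (hdot (v - vs) (R *v (v - vs)))" by (rule hpd_nonneg[OF hR])
  have h1: "hdot (v - vs) (R *v (v - vs)) = hdot v (R *v v) - hdot v a - hdot vs (R *v v) + hdot vs a"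
    by (simp add: matrix_vector_mult_diff_distrib hdot_diff_left hdot_diff_right Rvs)
  have h2: "Re (hdot vs (R *v v)) = Re (hdot v a)"
    by (simp add: hpd_herm[OF hR, symmetric] Rvs Re_hdot_sym)
  have "0 \<le> Re (hdot v (R *v v)) - Re (hdot v a) - Re (hdot vs (R *v v)) + Re (hdot vs a)"
    using h0 unfolding h1 by simp
  thus ?thesis using ob h2 by simp
qed

lemma obj_exact:
  assumes hR: "R \<in> Hpp"
  shows "obj a R = 2 * Re (hdot (matrix_inv R *v a) a) - Re (hdot (matrix_inv R *v a) (R *v (matrix_inv R *v a)))"
  by (simp add: Rinv_v[OF hR] obj_def Re_hdot_sym)

lemma obj_nonneg: "R \<in> Hpp \<Longrightarrow> obj a R \<ge> 0"
  using obj_var[where v=0 and a=a] by simp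

lemma cnj_mult_self: "cnj z * z = complex_of_real ((Re z)^2 + (Im z)^2)"
  by (simp add: complex_eq_iff power2_eq_square)

lemma Re_hdot_prod: "Re (hdot w a * hdot a w) = (Re (hdot w a))^2 + (Im (hdot w a))^2"
  by (subst hdot_conj[of a w]) (simp add: power2_eq_square)

lemma ratio_nonneg: "R \<in> Hpp \<Longrightarrow> ratio w a R \<ge> 0"
  unfolding ratio_def Re_hdot_prod using hpd_nonneg[of R w] by simp

lemma ratio_le_obj:
  assumes hR: "R \<in> Hpp" and w0: "w \<noteq> 0"
  shows "ratio w a R \<le> obj a R"
proof -
  define z where "z = hdot w a"
  define q where "q = Re (hdot w (R *v w))"
  define N where "N = (Re z)^2 + (Im z)^2"
  have qp: "q > 0" using hpd_pos[OF hR w0] q_def by simp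
  define k where "k = z / complex_of_real q"
  define v where "v = k *s w"
  have "hdot v a = cnj k * z" by (simp add: v_def hdot_smult_left z_def)
  also have "\<dots> = cnj z * z / complex_of_real q" by (simp add: k_def)
  finally have va: "Re (hdot v a) = N / q" by (simp add: cnj_mult_self N_def)
  have "hdot v (R *v v) = cnj k * k * hdot w (R *v w)"
    by (simp add: v_def hdot_smult_left hdot_smult_right mv_smult mult_ac)
  also have "cnj k * k = complex_of_real (N / q^2)"
    by (simp add: k_def cnj_mult_self N_def power2_eq_square)
  finally have vv: "Re (hdot v (R *v v)) = N / q" using qp by (simp add: q_def power2_eq_square)
  have "ratio w a R = N / q" unfolding ratio_def Re_hdot_prod by (simp add: z_def q_def N_def)
  also have "\<dots> = 2 * (N / q) - N / q" by simp
  also have "\<dots> \<le> obj a R" using obj_var[OF hR, where a=a and v=v] va vv by simp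
  finally show ?thesis .
qed

lemma ratio_at_opt:
  assumes hR: "R \<in> Hpp"
  shows "ratio (matrix_inv R *v a) a R = obj a R"
proof -
  define vs where "vs = matrix_inv R *v a"
  have Rvs: "R *v vs = a" by (simp add: vs_def Rinv_v[OF hR])
  have X: "hdot vs a = cnj (hdot vs a)"
    using hpd_herm[OF hR, of vs vs] hdot_conj[of "R *v vs" vs] Rvs by simp
  have "Re (hdot vs a) = obj a R" by (simp add: obj_def vs_def Re_hdot_sym)
  moreover have "Im (hdot vs a) = 0"
  proof -
    have "Im (hdot vs a) = - Im (hdot vs a)" using arg_cong[OF X, of Im] by simp
    thus ?thesis by simp
  qed
  ultimately have "ratio vs a R = (obj a R)^2 / obj a R"
    unfolding ratio_def Re_hdot_prod Rvs by simp
  also have "\<dots> = obj a R" by (simp add: power2_eq_square)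
  finally show ?thesis by (simp add: vs_def)
qed

lemma ratio_scale:
  assumes "c \<noteq> 0"
  shows "ratio (c *s w) a R = ratio w a R"
proof -
  define r where "r = (Re c)^2 + (Im c)^2"
  have r0: "r \<noteq> 0" using assms by (simp add: r_def complex_eq_iff)
  have "hdot (c *s w) a * hdot a (c *s w) = (cnj c * c) * (hdot w a * hdot a w)"
    by (simp add: hdot_smult_left hdot_smult_right mult_ac)
  hence n: "Re (hdot (c *s w) a * hdot a (c *s w)) = r * Re (hdot w a * hdot a w)"
    by (simp add: cnj_mult_self r_def)
  have "hdot (c *s w) (R *v (c *s w)) = (cnj c * c) * hdot w (R *v w)"
    by (simp add: hdot_smult_left hdot_smult_right mv_smult mult_ac)
  hence d: "Re (hdot (c *s w) (R *v (c *s w))) = r * Re (hdot w (R *v w))"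
    by (simp add: cnj_mult_self r_def)
  show ?thesis unfolding ratio_def n d using r0 by simp
qed

lemma theta_exists:
  fixes s E :: real
  assumes s: "s < 0" and E: "E \<ge> 0"
  shows "\<exists>\<theta>. 0 < \<theta> \<and> \<theta> \<le> 1/2 \<and> \<theta> * s + 2*\<theta>^2*E < 0"
proof -
  define \<theta> where "\<theta> = min (1/2) (-s/(4*E+1))"
  have den: "4*E+1 > 0" using E by simp
  have "-s/(4*E+1) > 0" using s den by (intro divide_pos_pos) auto
  hence tp: "\<theta> > 0" by (simp add: \<theta>_def)
  have t1: "\<theta> \<le> -s/(4*E+1)" by (simp add: \<theta>_def)
  have "2*\<theta>*E = \<theta>*(2*E)" by simp
  also have "\<dots> \<le> (-s/(4*E+1))*(2*E)" using t1 E by (intro mult_right_mono) auto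
  also have "\<dots> = (-s) * (2*E/(4*E+1))" by simp
  also have "\<dots> < (-s) * 1"
  proof (rule mult_strict_left_mono)
    show "2*E/(4*E+1) < 1" using den E by simp
  qed (use s in simp)
  finally have "s + 2*\<theta>*E < 0" by simp
  hence "\<theta> * (s + 2*\<theta>*E) < 0" using tp by (simp add: mult_pos_neg)
  moreover have "\<theta> * (s + 2*\<theta>*E) = \<theta> * s + 2*\<theta>^2*E" by (simp add: algebra_simps power2_eq_square)
  moreover have "\<theta> \<le> 1/2" unfolding \<theta>_def by (rule min.cobounded1)
  ultimately show ?thesis using tp by (metis)
qed

lemma bracket:
  fixes \<theta> P Q E :: real
  assumes "0 < \<theta>" "\<theta> \<le> 1/2" "Q \<ge> 0" "P^2 \<le> E*Q" "E \<ge> 0"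
  shows "2*\<theta>*P - (1-\<theta>)*Q \<le> 2*\<theta>^2*E"
proof (cases "Q = 0")
  case True
  hence "P = 0" using assms(4) by simp
  thus ?thesis using True assms by simp
next
  case False
  hence Qp: "Q > 0" using assms(3) by simp
  have "2*\<theta>^2*P^2 - Q*(2*\<theta>*P - Q/2) = 2*(\<theta>*P - Q/2)^2"
    by (simp add: power2_eq_square algebra_simps)
  hence "Q*(2*\<theta>*P - Q/2) \<le> 2*\<theta>^2*P^2" by (smt (verit) zero_le_power2)
  also have "\<dots> \<le> 2*\<theta>^2*(E*Q)" using assms(4) by (simp add: mult_left_mono)
  also have "\<dots> = Q*(2*\<theta>^2*E)" by simp
  finally have "2*\<theta>*P - Q/2 \<le> 2*\<theta>^2*E" using Qp by (simp add: mult_le_cancel_left_pos)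
  moreover have "(1-\<theta>)*Q \<ge> Q/2"
  proof -
    have "Q*\<theta> \<le> Q*(1/2)" using assms(2) Qp by (intro mult_left_mono) auto
    thus ?thesis by (simp add: algebra_simps)
  qed
  ultimately show ?thesis by simp
qed

lemma Re_hdot_scaleR_right: "Re (hdot x (r *\<^sub>R y)) = r * Re (hdot x y)"
  by (simp add: hdot_scaleR_right)

lemma lin_cond:
  fixes A :: "(complex ^ 'n) set" and B :: "(complex ^ 'n ^ 'n) set"
  assumes B_sub: "B \<subseteq> Hpp" and A_convex: "convex A" and B_convex: "convex B"
    and a0_in: "a0 \<in> A" and R0_in: "R0 \<in> B"
    and opt: "\<forall>a\<in>A. \<forall>R\<in>B. obj a0 R0 \<le> obj a R"
    and a: "a \<in> A" and R: "R \<in> B"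
  shows "2 * Re (hdot (matrix_inv R0 *v a0) a) \<ge> obj a0 R0 + Re (hdot (matrix_inv R0 *v a0) (R *v (matrix_inv R0 *v a0)))"
proof (rule ccontr)
  define w where "w = matrix_inv R0 *v a0"
  define t where "t = obj a0 R0"
  define q where "q = Re (hdot w (R *v w))"
  define p where "p = Re (hdot w a)"
  define s where "s = 2*p - t - q"
  assume "\<not> ?thesis"
  hence sneg: "s < 0" by (simp add: s_def p_def q_def t_def w_def)
  have hR0: "R0 \<in> Hpp" and hR: "R \<in> Hpp" using B_sub R0_in R by auto
  have R0w: "R0 *v w = a0" by (simp add: w_def Rinv_v[OF hR0])
  have wa0: "Re (hdot w a0) = t" by (simp add: t_def obj_def w_def Re_hdot_sym)
  have wR0w: "Re (hdot w (R0 *v w)) = t" using wa0 R0w by simp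
  define e where "e = a - R *v w"
  define E where "E = obj e R0"
  have E0: "E \<ge> 0" by (simp add: E_def obj_nonneg[OF hR0])
  obtain \<theta> where th: "0 < \<theta>" "\<theta> \<le> 1/2" and neg: "\<theta> * s + 2*\<theta>^2*E < 0"
    using theta_exists[OF sneg E0] by blast
  define aT where "aT = (1-\<theta>) *\<^sub>R a0 + \<theta> *\<^sub>R a"
  define Rt where "Rt = (1-\<theta>) *\<^sub>R R0 + \<theta> *\<^sub>R R"
  have atA: "aT \<in> A" unfolding aT_def using th by (intro convexD[OF A_convex a0_in a]) auto
  have RtB: "Rt \<in> B" unfolding Rt_def using th by (intro convexD[OF B_convex R0_in R]) auto
  have hRt: "Rt \<in> Hpp" using RtB B_sub by auto
  define vt where "vt = matrix_inv Rt *v aT"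
  define u where "u = vt - w"
  have vt: "vt = w + u" by (simp add: u_def)
  have ex: "obj aT Rt = 2 * Re (hdot vt aT) - Re (hdot vt (Rt *v vt))"
    unfolding vt_def by (rule obj_exact[OF hRt])
  have Rtv: "Rt *v x = (1-\<theta>) *\<^sub>R (R0 *v x) + \<theta> *\<^sub>R (R *v x)" for x
    by (simp add: Rt_def matrix_vector_mult_add_rdistrib scaleR_mv)
  have cross: "Re (hdot w (Rt *v u)) = Re (hdot u (Rt *v w))"
  proof -
    have "hdot w (Rt *v u) = hdot (Rt *v w) u" by (rule hpd_herm[OF hRt, symmetric])
    thus ?thesis using Re_hdot_sym[of "Rt *v w" u] by simp
  qed
  have expand: "2 * Re (hdot vt aT) - Re (hdot vt (Rt *v vt))
      = (2 * Re (hdot w aT) - Re (hdot w (Rt *v w))) + 2 * Re (hdot u (aT - Rt *v w)) - Re (hdot u (Rt *v u))"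
    unfolding vt using cross
    by (simp add: hdot_add_left hdot_add_right hdot_diff_right matrix_vector_right_distrib)
  have G: "2 * Re (hdot w aT) - Re (hdot w (Rt *v w)) = t + \<theta> * s"
  proof -
    have "Re (hdot w aT) = (1-\<theta>) * t + \<theta> * p"
      by (simp add: aT_def hdot_add_right Re_hdot_scaleR_right wa0 p_def)
    moreover have "Re (hdot w (Rt *v w)) = (1-\<theta>) * t + \<theta> * q"
      by (simp add: Rtv hdot_add_right Re_hdot_scaleR_right wR0w q_def)
    ultimately show ?thesis by (simp add: s_def algebra_simps)
  qed
  have ae: "aT - Rt *v w = \<theta> *\<^sub>R e"
    by (simp add: aT_def Rtv R0w e_def algebra_simps)
  define P where "P = Re (hdot u e)"
  define Q where "Q = Re (hdot u (R0 *v u))"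
  have Q0: "Q \<ge> 0" unfolding Q_def by (rule hpd_nonneg[OF hR0])
  have lin2: "Re (hdot u (aT - Rt *v w)) = \<theta> * P"
    by (simp add: ae Re_hdot_scaleR_right P_def)
  have quad: "Re (hdot u (Rt *v u)) \<ge> (1-\<theta>) * Q"
  proof -
    have "Re (hdot u (Rt *v u)) = (1-\<theta>) * Q + \<theta> * Re (hdot u (R *v u))"
      by (simp add: Rtv hdot_add_right Re_hdot_scaleR_right Q_def)
    moreover have "\<theta> * Re (hdot u (R *v u)) \<ge> 0" using th hpd_nonneg[OF hR, of u] by simp
    ultimately show ?thesis by simp
  qed
  have PQ: "P^2 \<le> E * Q"
  proof (cases "u = 0")
    case True thus ?thesis by (simp add: P_def Q_def)
  next
    case False
    have Qp: "Q > 0" unfolding Q_def by (rule hpd_pos[OF hR0 False])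
    have "ratio u e R0 \<le> E" unfolding E_def by (rule ratio_le_obj[OF hR0 False])
    moreover have "ratio u e R0 = ((Re (hdot u e))^2 + (Im (hdot u e))^2) / Q"
      unfolding ratio_def Re_hdot_prod Q_def ..
    ultimately have "(Re (hdot u e))^2 + (Im (hdot u e))^2 \<le> E * Q"
      using Qp by (simp add: divide_le_eq)
    moreover have "P^2 \<le> (Re (hdot u e))^2 + (Im (hdot u e))^2" by (simp add: P_def)
    ultimately show ?thesis by linarith
  qed
  have br: "2*\<theta>*P - (1-\<theta>)*Q \<le> 2*\<theta>^2*E" by (rule bracket[OF th Q0 PQ E0])
  have "obj aT Rt = t + \<theta> * s + 2 * (\<theta> * P) - Re (hdot u (Rt *v u))"
    using ex expand G lin2 by simp
  also have "\<dots> \<le> t + \<theta> * s + 2*\<theta>*P - (1-\<theta>) * Q" using quad by simp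
  also have "\<dots> \<le> t + \<theta> * s + 2*\<theta>^2*E" using br by simp
  also have "\<dots> < t" using neg by simp
  finally have "obj aT Rt < obj a0 R0" by (simp add: t_def)
  moreover have "obj a0 R0 \<le> obj aT Rt" using opt atA RtB by blast
  ultimately show False by simp
qed

theorem corollary1:
  fixes A :: "(complex ^ 'n) set" and B :: "(complex ^ 'n ^ 'n) set"
    and a0 :: "complex ^ 'n" and R0 :: "complex ^ 'n ^ 'n" and w0 :: "complex ^ 'n"
  assumes A_sub: "A \<subseteq> - {0}" and A_convex: "convex A" and A_closed: "closed A"
    and B_sub: "B \<subseteq> Hpp" and B_convex: "convex B" and B_closed: "closed B"
    and a0_in: "a0 \<in> A" and R0_in: "R0 \<in> B"
    and opt: "\<forall>a\<in>A. \<forall>R\<in>B. obj a0 R0 \<le> obj a R"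
    and w0_def: "w0 = (1 / complex_of_real (norm (inv_sqrt_mat R0 *v a0))) *s (matrix_inv R0 *v a0)"
  shows
    "Re (hdot w0 a0 * hdot a0 w0)
       = (SUP w\<in>{w. w \<noteq> 0}. INF p\<in>A \<times> B. ratio w (fst p) (snd p))
     \<and> Re (hdot w0 a0 * hdot a0 w0)
       = (INF p\<in>A \<times> B. SUP w\<in>{w. w \<noteq> 0}. ratio w (fst p) (snd p))
     \<comment> \<open>(w0, a0, R0) solves the maximin problem\<close>
     \<and> w0 \<noteq> 0
     \<and> (\<forall>w. w \<noteq> 0 \<longrightarrow> (INF p\<in>A \<times> B. ratio w (fst p) (snd p)) \<le> (INF p\<in>A \<times> B. ratio w0 (fst p) (snd p)))
     \<and> (\<forall>a\<in>A. \<forall>R\<in>B. ratio w0 a0 R0 \<le> ratio w0 a R)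
     \<and> ratio w0 a0 R0 = Re (hdot w0 a0 * hdot a0 w0)
     \<comment> \<open>(w0, a0, R0) solves the minimax problem\<close>
     \<and> (\<forall>a\<in>A. \<forall>R\<in>B. (SUP w\<in>{w. w \<noteq> 0}. ratio w a0 R0) \<le> (SUP w\<in>{w. w \<noteq> 0}. ratio w a R))
     \<and> (\<forall>w. w \<noteq> 0 \<longrightarrow> ratio w a0 R0 \<le> ratio w0 a0 R0)"
proof -
  have hR0: "R0 \<in> Hpp" using B_sub R0_in by auto
  have a0nz: "a0 \<noteq> 0" using A_sub a0_in by auto
  define w where "w = matrix_inv R0 *v a0"
  define t where "t = obj a0 R0"
  have R0w: "R0 *v w = a0" by (simp add: w_def Rinv_v[OF hR0])
  have wnz: "w \<noteq> 0" using R0w a0nz by auto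
  have X: "hdot w a0 = hdot a0 w"
  proof -
    have "hdot (R0 *v w) w = hdot w (R0 *v w)" by (rule hpd_herm[OF hR0])
    thus ?thesis using R0w by simp
  qed
  have tdef: "Re (hdot a0 w) = t" by (simp add: t_def obj_def w_def)
  have real: "hdot a0 w = complex_of_real t"
  proof -
    have "hdot a0 w = cnj (hdot w a0)" by (rule hdot_conj)
    also have "\<dots> = cnj (hdot a0 w)" by (simp only: X)
    finally have eq: "hdot a0 w = cnj (hdot a0 w)" .
    have "Im (hdot a0 w) = - Im (hdot a0 w)" using arg_cong[OF eq, of Im] by simp
    hence "Im (hdot a0 w) = 0" by simp
    thus ?thesis using tdef by (simp add: complex_eq_iff)
  qed
  have tpos: "t > 0"
  proof -
    have "Re (hdot w (R0 *v w)) > 0" by (rule hpd_pos[OF hR0 wnz])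
    thus ?thesis using R0w X tdef by simp
  qed
  have hMi: "hpd_mat (matrix_inv R0)" by (rule inv_hpd[OF hR0])
  obtain Sx where Sx: "hpd_mat Sx" "Sx ** Sx = matrix_inv R0"
    using hpd_sqrt_exists[OF hMi] by blast
  have ex1: "\<exists>!S. hpd_mat S \<and> S ** S = matrix_inv R0"
  proof (rule ex1I[of _ Sx])
    show "hpd_mat Sx \<and> Sx ** Sx = matrix_inv R0" using Sx by simp
  next
    fix S assume "hpd_mat S \<and> S ** S = matrix_inv R0"
    thus "S = Sx" using hpd_sqrt_unique[of S Sx] Sx by simp
  qed
  define S0 where "S0 = inv_sqrt_mat R0"
  have S0: "hpd_mat S0 \<and> S0 ** S0 = matrix_inv R0"
    unfolding S0_def inv_sqrt_mat_def by (rule theI'[OF ex1])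
  have hS0: "hermitian_mat S0" using S0 by (simp add: hpd_mat_def)
  have nS2: "(norm (S0 *v a0))^2 = t"
  proof -
    have "(norm (S0 *v a0))^2 = (S0 *v a0) \<bullet> (S0 *v a0)" by (simp add: dot_square_norm)
    also have "\<dots> = Re (hdot (S0 *v a0) (S0 *v a0))" by (simp add: inner_hdot)
    also have "\<dots> = Re (hdot a0 (S0 *v (S0 *v a0)))" by (simp add: herm_sym[OF hS0])
    also have "\<dots> = Re (hdot a0 (matrix_inv R0 *v a0))" using S0 by (simp add: matrix_vector_mul_assoc)
    finally show ?thesis by (simp add: t_def obj_def)
  qed
  have nS: "norm (S0 *v a0) = sqrt t"
    using nS2 by (metis norm_ge_zero real_sqrt_abs abs_of_nonneg)
  define c where "c = complex_of_real (1 / sqrt t)"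
  have w0c: "w0 = c *s w" using w0_def nS by (simp add: c_def w_def S0_def)
  have cnz: "c \<noteq> 0" using tpos by (simp add: c_def)
  have w0nz: "w0 \<noteq> 0"
  proof
    assume "w0 = 0"
    hence "inverse c *s (c *s w) = 0" using w0c by simp
    hence "w = 0" using cnz by (simp add: vector_smult_assoc)
    thus False using wnz by simp
  qed
  have sq: "sqrt t * sqrt t = t" using tpos by simp
  have val: "Re (hdot w0 a0 * hdot a0 w0) = t"
  proof -
    have r1: "(1/sqrt t)*(1/sqrt t) = 1/(sqrt t * sqrt t)" by simp
    have r2: "(1/sqrt t)*(1/sqrt t) = 1/t" unfolding r1 sq ..
    have cc: "c * c = complex_of_real (1/t)" unfolding c_def of_real_mult[symmetric] r2 ..
    have cc': "cnj c = c" by (simp add: c_def)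
    have "hdot w0 a0 * hdot a0 w0 = (c * c) * (complex_of_real t * complex_of_real t)"
      by (simp add: w0c hdot_smult_left hdot_smult_right X real cc' mult_ac)
    also have "\<dots> = complex_of_real ((1/t) * (t * t))" unfolding cc by simp
    also have "(1/t) * (t * t) = t" using tpos by simp
    finally show ?thesis by simp
  qed
  have rat_w: "ratio w a0 R0 = t" unfolding w_def t_def by (rule ratio_at_opt[OF hR0])
  have rat_w0: "ratio w0 a0 R0 = t" using rat_w cnz by (simp add: w0c ratio_scale)
  have key: "t \<le> ratio w a R" if a: "a \<in> A" and R: "R \<in> B" for a R
  proof -
    have hR: "R \<in> Hpp" using B_sub R by auto
    define q where "q = Re (hdot w (R *v w))"
    define z where "z = hdot w a"
    have qp: "q > 0" unfolding q_def by (rule hpd_pos[OF hR wnz])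
    have lc: "2 * Re z \<ge> t + q"
      using lin_cond[OF B_sub A_convex B_convex a0_in R0_in opt a R]
      by (simp add: z_def q_def t_def w_def)
    have "t * q \<le> ((t + q) / 2)^2"
    proof -
      have "((t + q) / 2)^2 - t * q = ((t - q) / 2)^2" by (simp add: power2_eq_square field_simps)
      thus ?thesis by (smt (verit) zero_le_power2)
    qed
    also have "\<dots> \<le> (Re z)^2"
      using lc tpos qp by (intro power_mono) auto
    also have "\<dots> \<le> (Re z)^2 + (Im z)^2" by simp
    finally have "t * q \<le> (Re z)^2 + (Im z)^2" .
    hence "t \<le> ((Re z)^2 + (Im z)^2) / q" using qp by (simp add: pos_le_divide_eq)
    also have "\<dots> = ratio w a R" unfolding ratio_def Re_hdot_prod z_def q_def ..
    finally show ?thesis .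
  qed
  have key0: "t \<le> ratio w0 a R" if "a \<in> A" "R \<in> B" for a R
    using key[OF that] cnz by (simp add: w0c ratio_scale)
  have bdd: "bdd_below ((\<lambda>p. ratio v (fst p) (snd p)) ` (A \<times> B))" for v
  proof (rule bdd_belowI[of _ 0])
    fix x assume "x \<in> (\<lambda>p. ratio v (fst p) (snd p)) ` (A \<times> B)"
    then obtain a R where "a \<in> A" "R \<in> B" "x = ratio v a R" by auto
    thus "0 \<le> x" using ratio_nonneg[of R v a] B_sub by auto
  qed
  have INF0: "(INF p\<in>A \<times> B. ratio w0 (fst p) (snd p)) = t"
  proof (rule cInf_eq_minimum)
    show "t \<in> (\<lambda>p. ratio w0 (fst p) (snd p)) ` (A \<times> B)"
      using a0_in R0_in rat_w0 by (intro image_eqI[of _ _ "(a0, R0)"]) auto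
  next
    fix x assume "x \<in> (\<lambda>p. ratio w0 (fst p) (snd p)) ` (A \<times> B)"
    thus "t \<le> x" using key0 by auto
  qed
  have INFv: "(INF p\<in>A \<times> B. ratio v (fst p) (snd p)) \<le> t" if "v \<noteq> 0" for v
  proof (rule cINF_lower2[OF bdd, of "(a0, R0)"])
    show "(a0, R0) \<in> A \<times> B" using a0_in R0_in by simp
    show "ratio v (fst (a0, R0)) (snd (a0, R0)) \<le> t"
      using ratio_le_obj[OF hR0 that, of a0] by (simp add: t_def)
  qed
  have maximin: "(SUP v\<in>{v. v \<noteq> 0}. INF p\<in>A \<times> B. ratio v (fst p) (snd p)) = t"
  proof (rule cSup_eq_maximum)
    show "t \<in> (\<lambda>v. INF p\<in>A \<times> B. ratio v (fst p) (snd p)) ` {v. v \<noteq> 0}"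
      using w0nz INF0 by (intro image_eqI[of _ _ w0]) auto
  next
    fix x assume "x \<in> (\<lambda>v. INF p\<in>A \<times> B. ratio v (fst p) (snd p)) ` {v. v \<noteq> 0}"
    thus "x \<le> t" using INFv by auto
  qed
  have SUPp: "(SUP v\<in>{v. v \<noteq> 0}. ratio v a R) = obj a R" if a: "a \<in> A" and R: "R \<in> B" for a R
  proof (rule cSup_eq_maximum)
    have hR: "R \<in> Hpp" using B_sub R by auto
    have anz: "a \<noteq> 0" using A_sub a by auto
    have "matrix_inv R *v a \<noteq> 0" using Rinv_v(1)[OF hR, of a] anz by auto
    thus "obj a R \<in> (\<lambda>v. ratio v a R) ` {v. v \<noteq> 0}"
      using ratio_at_opt[OF hR, of a] by (intro image_eqI[of _ _ "matrix_inv R *v a"]) auto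
  next
    fix x assume "x \<in> (\<lambda>v. ratio v a R) ` {v. v \<noteq> 0}"
    thus "x \<le> obj a R" using ratio_le_obj B_sub R by auto
  qed
  have minimax: "(INF p\<in>A \<times> B. SUP v\<in>{v. v \<noteq> 0}. ratio v (fst p) (snd p)) = t"
  proof -
    have "(INF p\<in>A \<times> B. SUP v\<in>{v. v \<noteq> 0}. ratio v (fst p) (snd p))
          = (INF p\<in>A \<times> B. obj (fst p) (snd p))"
      by (rule INF_cong) (auto simp: SUPp)
    also have "\<dots> = t"
    proof (rule cInf_eq_minimum)
      show "t \<in> (\<lambda>p. obj (fst p) (snd p)) ` (A \<times> B)"
        using a0_in R0_in by (intro image_eqI[of _ _ "(a0, R0)"]) (auto simp: t_def)
    next
      fix x assume "x \<in> (\<lambda>p. obj (fst p) (snd p)) ` (A \<times> B)"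
      thus "t \<le> x" using opt by (auto simp: t_def)
    qed
    finally show ?thesis .
  qed
  have p4: "\<forall>v. v \<noteq> 0 \<longrightarrow> (INF p\<in>A \<times> B. ratio v (fst p) (snd p)) \<le> (INF p\<in>A \<times> B. ratio w0 (fst p) (snd p))"
    using INFv INF0 by simp
  have p5: "\<forall>a\<in>A. \<forall>R\<in>B. ratio w0 a0 R0 \<le> ratio w0 a R" using rat_w0 key0 by simp
  have p7: "\<forall>a\<in>A. \<forall>R\<in>B. (SUP v\<in>{v. v \<noteq> 0}. ratio v a0 R0) \<le> (SUP v\<in>{v. v \<noteq> 0}. ratio v a R)"
    using SUPp[OF a0_in R0_in] SUPp opt by simp
  have p8: "\<forall>v. v \<noteq> 0 \<longrightarrow> ratio v a0 R0 \<le> ratio w0 a0 R0"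
    using ratio_le_obj[OF hR0] rat_w0 by (simp add: t_def)
  show ?thesis
    using val maximin minimax w0nz p4 p5 rat_w0 p7 p8 by simp
qed

end
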